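(* For every $s>0$ let $\sigma_s$ be a Borel probability measure on $\mathbb S^{N-1}$ and let $e_s\in\mathbb S^{N-1}$ be a maximum point of $M_{s,\sigma_s}$. Then $$\liminf_{s\to+\infty}\int_{\mathbb S^{N-1}}|e_s\cdot\theta|^{2s}\sigma_s(d\theta)>0\quad\Longleftrightarrow\quad\inf_{s>0}\int_{\mathbb S^{N-1}}|e_s\cdot\theta|^{2s}\sigma_s(d\theta)>0.$$
   Context: For a Borel probability measure $\sigma$ on $\mathbb S^{N-1}$, $s\ge0$ and $e\in\mathbb S^{N-1}$, $M_{s,\sigma}(e)=\int_{\mathbb S^{N-1}}|e\cdot\theta|^{2s}\sigma(d\theta)$. *)

theory Defs
  imports "HOL-Probability.Probability"
begin

definition borel_prob_on_sphere :: "'a::euclidean_space measure \<Rightarrow> bool" where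
  "borel_prob_on_sphere \<sigma> \<longleftrightarrow> prob_space \<sigma> \<and> space \<sigma> = sphere 0 1 \<and>
     sets \<sigma> = sets (restrict_space borel (sphere (0::'a) 1))"

text \<open>M_{s,sigma}(e) = integral of |e . theta|^(2s); the convention t^0 = 1 (also for t = 0) is used.\<close>
definition Mfun :: "real \<Rightarrow> 'a::euclidean_space measure \<Rightarrow> 'a \<Rightarrow> real" where
  "Mfun s \<sigma> e = (\<integral>\<theta>. (if s = 0 then 1 else \<bar>e \<bullet> \<theta>\<bar> powr (2 * s)) \<partial>\<sigma>)"

end

theory Submission
  imports Defs
begin

lemma sum_sq_basis:
  fixes \<theta> :: "'a::euclidean_space"
  assumes "\<theta> \<in> sphere 0 1"
  shows "(\<Sum>b\<in>Basis. (b \<bullet> \<theta>)\<^sup>2) = 1"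
proof -
  have "norm \<theta> = 1" using assms by simp
  hence "\<theta> \<bullet> \<theta> = 1" by (simp add: norm_eq_sqrt_inner)
  moreover have "\<theta> \<bullet> \<theta> = (\<Sum>b\<in>Basis. (\<theta> \<bullet> b) * (\<theta> \<bullet> b))"
    by (rule euclidean_inner)
  moreover have "\<And>b. (\<theta> \<bullet> b) * (\<theta> \<bullet> b) = (b \<bullet> \<theta>)\<^sup>2"
    by (simp only: power2_eq_square inner_commute)
  ultimately show ?thesis by simp
qed

lemma pointwise_bound:
  fixes \<theta> :: "'a::euclidean_space"
  assumes "\<theta> \<in> sphere 0 1" "s > 0"
  shows "real DIM('a) powr (-s) \<le> (\<Sum>b\<in>Basis. \<bar>b \<bullet> \<theta>\<bar> powr (2 * s))"
proof -
  let ?N = "real DIM('a)"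
  have Npos: "?N > 0" by simp
  have "\<exists>b\<in>Basis. (b \<bullet> \<theta>)\<^sup>2 \<ge> 1 / ?N"
  proof (rule ccontr)
    assume "\<not> ?thesis"
    hence lt: "\<And>b. b \<in> Basis \<Longrightarrow> (b \<bullet> \<theta>)\<^sup>2 < 1 / ?N" by force
    have "(\<Sum>b\<in>Basis. (b \<bullet> \<theta>)\<^sup>2) < (\<Sum>b\<in>(Basis::'a set). 1 / ?N)"
      by (rule sum_strict_mono) (auto intro: lt)
    also have "\<dots> = 1" by simp
    finally show False using sum_sq_basis[OF assms(1)] by simp
  qed
  then obtain b where b: "b \<in> Basis" "(b \<bullet> \<theta>)\<^sup>2 \<ge> 1 / ?N" by blast
  have "?N powr (-s) = (1 / ?N) powr s"
    by (simp add: powr_minus_divide powr_divide)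
  also have "\<dots> \<le> ((b \<bullet> \<theta>)\<^sup>2) powr s"
    using b(2) assms(2) by (intro powr_mono2) auto
  also have "\<dots> = \<bar>b \<bullet> \<theta>\<bar> powr (2 * s)"
  proof -
    have A: "\<bar>b \<bullet> \<theta>\<bar> powr 2 = (b \<bullet> \<theta>)\<^sup>2"
      by (subst powr_numeral) auto
    have B: "\<bar>b \<bullet> \<theta>\<bar> powr (2 * s) = (\<bar>b \<bullet> \<theta>\<bar> powr 2) powr s"
      by (rule powr_powr[symmetric])
    show ?thesis by (simp only: A B)
  qed
  also have "\<dots> \<le> (\<Sum>b\<in>Basis. \<bar>b \<bullet> \<theta>\<bar> powr (2 * s))"
    using b(1) by (intro member_le_sum) auto
  finally show ?thesis .
qed

lemma integrable_pow:
  fixes \<sigma> :: "'a::euclidean_space measure"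
  assumes "borel_prob_on_sphere \<sigma>" "u \<in> sphere 0 1" "s > 0"
  shows "integrable \<sigma> (\<lambda>\<theta>. \<bar>u \<bullet> \<theta>\<bar> powr (2 * s))"
proof -
  interpret prob_space \<sigma> using assms unfolding borel_prob_on_sphere_def by auto
  have sp: "space \<sigma> = sphere 0 1" and st: "sets \<sigma> = sets (restrict_space borel (sphere (0::'a) 1))"
    using assms unfolding borel_prob_on_sphere_def by auto
  have "(\<lambda>\<theta>. \<bar>u \<bullet> \<theta>\<bar> powr (2 * s)) \<in> borel_measurable (restrict_space borel (sphere (0::'a) 1))"
    by (intro measurable_restrict_space1) measurable
  hence m: "(\<lambda>\<theta>. \<bar>u \<bullet> \<theta>\<bar> powr (2 * s)) \<in> borel_measurable \<sigma>"
    using measurable_cong_sets[OF st refl] by blast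
  have "AE \<theta> in \<sigma>. norm (\<bar>u \<bullet> \<theta>\<bar> powr (2 * s)) \<le> 1"
  proof (rule AE_I2)
    fix \<theta> assume "\<theta> \<in> space \<sigma>"
    hence "norm \<theta> = 1" using sp by simp
    hence "\<bar>u \<bullet> \<theta>\<bar> \<le> 1" using Cauchy_Schwarz_ineq2[of u \<theta>] assms(2) by simp
    thus "norm (\<bar>u \<bullet> \<theta>\<bar> powr (2 * s)) \<le> 1"
      using assms(3) by (auto intro!: powr_le1)
  qed
  thus ?thesis using m by (rule integrable_const_bound[where B=1])
qed


lemma exists_good_dir:
  fixes \<sigma> :: "'a::euclidean_space measure"
  assumes P: "borel_prob_on_sphere \<sigma>" and s: "s > 0"
  shows "\<exists>u\<in>sphere (0::'a) 1. real DIM('a) powr (-s) / real DIM('a) \<le> (\<integral>\<theta>. \<bar>u \<bullet> \<theta>\<bar> powr (2 * s) \<partial>\<sigma>)"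
proof (rule ccontr)
  let ?N = "real DIM('a)"
  interpret prob_space \<sigma> using P unfolding borel_prob_on_sphere_def by auto
  have sp: "space \<sigma> = sphere 0 1" using P unfolding borel_prob_on_sphere_def by auto
  assume neg: "\<not> ?thesis"
  have lt: "\<And>b. b \<in> Basis \<Longrightarrow> (\<integral>\<theta>. \<bar>b \<bullet> \<theta>\<bar> powr (2 * s) \<partial>\<sigma>) < ?N powr (-s) / ?N"
  proof -
    fix b :: 'a assume "b \<in> Basis"
    hence "b \<in> sphere 0 1" by simp
    thus "(\<integral>\<theta>. \<bar>b \<bullet> \<theta>\<bar> powr (2 * s) \<partial>\<sigma>) < ?N powr (-s) / ?N"
      using neg by (simp add: not_le)
  qed
  have int: "\<And>b. b \<in> (Basis::'a set) \<Longrightarrow> integrable \<sigma> (\<lambda>\<theta>. \<bar>b \<bullet> \<theta>\<bar> powr (2 * s))"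
    using integrable_pow[OF P _ s] by simp
  have "?N powr (-s) = (\<integral>\<theta>. ?N powr (-s) \<partial>\<sigma>)" by (simp add: prob_space)
  also have "\<dots> \<le> (\<integral>\<theta>. (\<Sum>b\<in>Basis. \<bar>b \<bullet> \<theta>\<bar> powr (2 * s)) \<partial>\<sigma>)"
    using int sp pointwise_bound[OF _ s] by (intro integral_mono) auto
  also have "\<dots> = (\<Sum>b\<in>Basis. (\<integral>\<theta>. \<bar>b \<bullet> \<theta>\<bar> powr (2 * s) \<partial>\<sigma>))"
    using int by (intro Bochner_Integration.integral_sum) auto
  also have "\<dots> < (\<Sum>b\<in>(Basis::'a set). ?N powr (-s) / ?N)"
    using lt by (intro sum_strict_mono) auto
  also have "\<dots> = ?N powr (-s)" by simp
  finally have "?N powr (-s) < ?N powr (-s)" .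
  thus False by (simp only: less_irrefl)
qed

theorem lemma2p2:
  fixes \<sigma> :: "real \<Rightarrow> 'a::euclidean_space measure" and e :: "real \<Rightarrow> 'a"
  assumes meas: "\<And>s. s > 0 \<Longrightarrow> borel_prob_on_sphere (\<sigma> s)"
    and e_sph: "\<And>s. s > 0 \<Longrightarrow> e s \<in> sphere 0 1"
    and e_max: "\<And>s u. s > 0 \<Longrightarrow> u \<in> sphere 0 1 \<Longrightarrow> Mfun s (\<sigma> s) u \<le> Mfun s (\<sigma> s) (e s)"
  shows "Liminf at_top (\<lambda>s. ereal (\<integral>\<theta>. \<bar>e s \<bullet> \<theta>\<bar> powr (2 * s) \<partial>\<sigma> s)) > 0
     \<longleftrightarrow> (INF s\<in>{0<..}. ereal (\<integral>\<theta>. \<bar>e s \<bullet> \<theta>\<bar> powr (2 * s) \<partial>\<sigma> s)) > 0"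
proof -
  define F where "F s = (\<integral>\<theta>. \<bar>e s \<bullet> \<theta>\<bar> powr (2 * s) \<partial>\<sigma> s)" for s
  let ?N = "real DIM('a)"
  have Npos: "?N > 0" by (simp add: DIM_positive)
  have N1: "?N \<ge> 1" using DIM_positive[where 'a='a] by linarith
  have lowF: "?N powr (-s) / ?N \<le> F s" if s: "s > 0" for s
  proof -
    obtain u where u: "u \<in> sphere 0 1" "?N powr (-s) / ?N \<le> (\<integral>\<theta>. \<bar>u \<bullet> \<theta>\<bar> powr (2 * s) \<partial>\<sigma> s)"
      using exists_good_dir[OF meas[OF s] s] by blast
    have le: "Mfun s (\<sigma> s) u \<le> Mfun s (\<sigma> s) (e s)" using e_max[OF s u(1)] .
    have sne: "s \<noteq> 0" using s by linarith
    have m1: "Mfun s (\<sigma> s) u = (\<integral>\<theta>. \<bar>u \<bullet> \<theta>\<bar> powr (2 * s) \<partial>\<sigma> s)"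
      unfolding Mfun_def by (simp only: if_not_P[OF sne])
    have m2: "Mfun s (\<sigma> s) (e s) = F s"
      unfolding Mfun_def F_def by (simp only: if_not_P[OF sne])
    show ?thesis using le u(2) unfolding m1 m2 by linarith
  qed
  show ?thesis unfolding F_def[symmetric]
  proof
    assume "Liminf at_top (\<lambda>s. ereal (F s)) > 0"
    then obtain c where c: "0 < ereal c" "ereal c < Liminf at_top (\<lambda>s. ereal (F s))"
      using ereal_dense2 by blast
    have cpos: "c > 0" using c(1) by simp
    have "eventually (\<lambda>s. ereal c < ereal (F s)) at_top" using less_LiminfD[OF c(2)] .
    then obtain S where S: "\<And>s. s \<ge> S \<Longrightarrow> c < F s"
      unfolding eventually_at_top_linorder by auto
    define S' where "S' = max S 1"
    define q where "q = ?N powr (-S') / ?N"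
    have qpos: "q > 0" unfolding q_def
      by (rule divide_pos_pos[OF _ Npos]) (simp only: powr_gt_zero, use Npos in linarith)
    define d where "d = min c q"
    have dpos: "d > 0" using cpos qpos unfolding d_def by linarith
    have "ereal d \<le> (INF s\<in>{0<..}. ereal (F s))"
    proof (rule INF_greatest)
      fix s :: real assume "s \<in> {0<..}"
      hence s: "s > 0" by simp
      show "ereal d \<le> ereal (F s)"
      proof (cases "s \<ge> S")
        case True
        hence "c < F s" using S[of s] by blast
        hence "d \<le> F s" unfolding d_def by linarith
        thus ?thesis by simp
      next
        case False
        hence "s \<le> S'" unfolding S'_def by linarith
        hence "-S' \<le> -s" by linarith
        hence "?N powr (-S') \<le> ?N powr (-s)"
          using N1 by (rule powr_mono)
        hence "q \<le> ?N powr (-s) / ?N" unfolding q_def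
          using Npos by (rule divide_right_mono[OF _ less_imp_le])
        hence "q \<le> F s" using lowF[OF s] by linarith
        hence "d \<le> F s" unfolding d_def by linarith
        thus ?thesis by simp
      qed
    qed
    moreover have "0 < ereal d" using dpos by simp
    ultimately show "(INF s\<in>{0<..}. ereal (F s)) > 0"
      by (rule order_less_le_trans[rotated])
  next
    assume A: "(INF s\<in>{0<..}. ereal (F s)) > 0"
    have "eventually (\<lambda>s. (INF s\<in>{0<..}. ereal (F s)) \<le> ereal (F s)) at_top"
      using eventually_gt_at_top[of "0::real"]
      by (rule eventually_mono) (rule INF_lower, simp)
    hence "(INF s\<in>{0<..}. ereal (F s)) \<le> Liminf at_top (\<lambda>s. ereal (F s))"
      by (rule Liminf_bounded)
    thus "Liminf at_top (\<lambda>s. ereal (F s)) > 0" using A by (rule order_less_le_trans[rotated])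
  qed
qed

end
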